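(* Let MSCQ hold at $\bar x$ with modulus $\sigma>0$. Let $x_k\in\Gamma$ with $x_k\to\bar x$, $x_k^*\to0$, $\lambda^k\to\tilde\lambda$ and $u_k\to\tilde u$ be sequences such that for all $k\in\mathbb N$ $$\lambda^k\in\Lambda\big(x_k,x_k^*-\nabla f(x_k);u_k\big)\cap\sigma\|x_k^*-\nabla f(x_k)\|\mathbb B,\qquad u_k\in K_\Gamma\big(x_k,x_k^*-\nabla f(x_k)\big)\cap\mathcal S,$$ and $\limsup_{k\to\infty}\langle\mathcal H(x_k,\lambda^k)u_k,u_k\rangle<\infty$. Then $$\tilde\lambda\in\Lambda\big(\bar x,-\nabla f(\bar x)\big)\cap\sigma\|\nabla f(\bar x)\|\mathbb B\subset\Lambda^0\big(\bar x,-\nabla f(\bar x)\big),$$ $$\tilde u\in\mathcal S,\quad\langle\tilde\lambda,\nabla g(\bar x)\tilde u\rangle=0,\quad\tilde\lambda_0\big(\|\nabla g_r(\bar x)\tilde u\|^2-(\nabla g_0(\bar x)\tilde u)^2\big)=0.$$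
   Context: Setting. Let $n,m\ge1$ and let $\mathcal Q:=\{(q_0,q_r)\in\mathbb R\times\mathbb R^m:\|q_r\|\le q_0\}$ be the second-order cone. For $q=(q_0,q_r)\in\mathbb R^{1+m}$ write $\hat q:=(-q_0,q_r)$, and let $\mathcal Q^*:=\{\hat q: q\in\mathcal Q\}=\{(q_0,q_r):\|q_r\|\le-q_0\}$. The normal cone to $\mathcal Q$ at $q\in\mathcal Q$ is $N_{\mathcal Q}(q)=\mathcal Q^*$ if $q=0$, $N_{\mathcal Q}(q)=\{0\}$ if $q\in\operatorname{int}\mathcal Q$, and $N_{\mathcal Q}(q)=\{\alpha\hat q:\alpha\ge0\}$ if $q\in\operatorname{bd}\mathcal Q\setminus\{0\}$. Problem (P) is: minimize $f(x)$ subject to $x\in\Gamma:=\{x\in\mathbb R^n: g(x)\in\mathcal Q\}$, where $f:\mathbb R^n\to\mathbb R$ and $g=(g_0,g_r):\mathbb R^n\to\mathbb R\times\mathbb R^m$ are $C^2$-smooth around a point $\bar x\in\Gamma$ with $g(\bar x)=0$. $\nabla g(x)$ is the Jacobian, $\nabla g(x)^*$ its transpose, $\nabla^2 g(x)(u,v)\in\mathbb R^{1+m}$ is the vector with components $u^T\nabla^2 g_i(x)v$, and $\nabla^2\langle\lambda,g\rangle(x)=\sum_i\lambda_i\nabla^2 g_i(x)$. $\mathcal S$ is the unit sphere, $\mathbb B$ the closed unit ball, and $r\mathbb B$ the closed ball of radius $r$ about $0$. MSCQ. The metric subregularity constraint qualification (MSCQ) holds at $\bar x$ with modulus $\sigma>0$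 if there is a neighborhood $U$ of $\bar x$ with $\operatorname{dist}(x;\Gamma)\le\sigma\operatorname{dist}(g(x);\mathcal Q)$ for all $x\in U$. Multipliers and cones. $T_\Gamma(x)$ is the Bouligand tangent cone $\{v:\exists t_k\downarrow0,\ v_k\to v,\ x+t_kv_k\in\Gamma\}$. For $x\in\Gamma$, $x^*\in\mathbb R^n$: $\Lambda(x,x^* ):=\{\lambda\in N_{\mathcal Q}(g(x)):\nabla g(x)^*\lambda=x^*\}$; $\Lambda^0(x,x^* ):=\{0\}$ if $x^*=0$ and $\Lambda^0(x,x^* ):=\Lambda(x,x^* )$ otherwise; the critical cone is $K_\Gamma(x,x^* ):=\{u\in T_\Gamma(x):\langle x^*,u\rangle=0\}$. The curvature mapping is $\mathcal H(x,\lambda):=\frac{-\lambda_0}{g_0(x)}\big(\nabla g_r(x)^*\nabla g_r(x)-\nabla g_0(x)^*\nabla g_0(x)\big)$ if $g(x)\in\operatorname{bd}\mathcal Q\setminus\{0\}$ and $\mathcal H(x,\lambda):=0$ otherwise. The directional multiplier set is $\Lambda(x,x^*;u):=\operatorname{argmax}_{\lambda\in\Lambda(x,x^* )}\langle(\nabla^2\langle\lambda,g\rangle(x)+\mathcal H(x,\lambda))u,u\rangle$. *)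

theory Defs
  imports "HOL-Analysis.Analysis"
begin

text \<open>Points of R x R^m are pairs (q0, qr); the norm and inner product on the
product type are the Euclidean ones.\<close>

definition SOC :: "(real \<times> (real^'m)) set" where
  "SOC = {q. norm (snd q) \<le> fst q}"

definition hat :: "real \<times> (real^'m) \<Rightarrow> real \<times> (real^'m)" where
  "hat q = (- fst q, snd q)"

definition SOC_dual :: "(real \<times> (real^'m)) set" where
  "SOC_dual = hat ` SOC"

definition normal_SOC :: "real \<times> (real^'m) \<Rightarrow> (real \<times> (real^'m)) set" where
  "normal_SOC q =
     (if q = 0 then SOC_dual
      else if q \<in> interior SOC then {0}
      else if q \<in> frontier SOC then {\<alpha> *\<^sub>R hat q | \<alpha>. \<alpha> \<ge> 0}
      else {})"

definition Gamma :: "(real^'n \<Rightarrow> real) \<Rightarrow> (real^'n \<Rightarrow> real^'m) \<Rightarrow> (real^'n) set" where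
  "Gamma g0 gr = {x. (g0 x, gr x) \<in> SOC}"

text \<open>Jacobian of g applied to a direction: nabla g(x) u = (nabla g0(x) u, nabla gr(x) u),
  with gg0 x the gradient of g0 and Jr x the Jacobian matrix (m x n) of gr.\<close>
definition jac_g :: "(real^'n \<Rightarrow> real^'n) \<Rightarrow> (real^'n \<Rightarrow> real^'n^'m) \<Rightarrow> real^'n \<Rightarrow> real^'n
    \<Rightarrow> real \<times> (real^'m)" where
  "jac_g gg0 Jr x u = (gg0 x \<bullet> u, Jr x *v u)"

definition jac_g_adj :: "(real^'n \<Rightarrow> real^'n) \<Rightarrow> (real^'n \<Rightarrow> real^'n^'m) \<Rightarrow> real^'n
    \<Rightarrow> real \<times> (real^'m) \<Rightarrow> real^'n" where
  "jac_g_adj gg0 Jr x lam = fst lam *\<^sub>R gg0 x + transpose (Jr x) *v snd lam"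

definition Lambda ::
  "(real^'n \<Rightarrow> real) \<Rightarrow> (real^'n \<Rightarrow> real^'m) \<Rightarrow> (real^'n \<Rightarrow> real^'n) \<Rightarrow> (real^'n \<Rightarrow> real^'n^'m)
   \<Rightarrow> real^'n \<Rightarrow> real^'n \<Rightarrow> (real \<times> (real^'m)) set" where
  "Lambda g0 gr gg0 Jr x xs =
     {lam \<in> normal_SOC (g0 x, gr x). jac_g_adj gg0 Jr x lam = xs}"

definition Lambda0 ::
  "(real^'n \<Rightarrow> real) \<Rightarrow> (real^'n \<Rightarrow> real^'m) \<Rightarrow> (real^'n \<Rightarrow> real^'n) \<Rightarrow> (real^'n \<Rightarrow> real^'n^'m)
   \<Rightarrow> real^'n \<Rightarrow> real^'n \<Rightarrow> (real \<times> (real^'m)) set" where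
  "Lambda0 g0 gr gg0 Jr x xs = (if xs = 0 then {0} else Lambda g0 gr gg0 Jr x xs)"

definition tangent_cone :: "'a::real_normed_vector set \<Rightarrow> 'a \<Rightarrow> 'a set" where
  "tangent_cone S x = {v. \<exists>t w. (\<forall>k. t k > 0) \<and> t \<longlonglongrightarrow> 0 \<and> w \<longlonglongrightarrow> v
                              \<and> (\<forall>k. x + t k *\<^sub>R w k \<in> S)}"

definition critical_cone ::
  "(real^'n \<Rightarrow> real) \<Rightarrow> (real^'n \<Rightarrow> real^'m) \<Rightarrow> real^'n \<Rightarrow> real^'n \<Rightarrow> (real^'n) set" where
  "critical_cone g0 gr x xs = {u \<in> tangent_cone (Gamma g0 gr) x. xs \<bullet> u = 0}"

definition curv ::
  "(real^'n \<Rightarrow> real) \<Rightarrow> (real^'n \<Rightarrow> real^'m) \<Rightarrow> (real^'n \<Rightarrow> real^'n) \<Rightarrow> (real^'n \<Rightarrow> real^'n^'m)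
   \<Rightarrow> real^'n \<Rightarrow> real \<times> (real^'m) \<Rightarrow> real^'n^'n" where
  "curv g0 gr gg0 Jr x lam =
     (if (g0 x, gr x) \<in> frontier SOC - {0}
      then (- fst lam / g0 x) *\<^sub>R
             (transpose (Jr x) ** Jr x - (\<chi> i j. gg0 x $ i * gg0 x $ j))
      else 0)"

text \<open>Hessian of the Lagrangian term: nabla^2 <lambda, g>(x), with Hg0 x the Hessian of g0
  and Hr x i the Hessian of the i-th component of gr.\<close>
definition hess_lag ::
  "(real^'n \<Rightarrow> real^'n^'n) \<Rightarrow> (real^'n \<Rightarrow> 'm \<Rightarrow> real^'n^'n) \<Rightarrow> real^'n \<Rightarrow> real \<times> (real^'m)
   \<Rightarrow> real^'n^'n" where
  "hess_lag Hg0 Hr x lam = fst lam *\<^sub>R Hg0 x + (\<Sum>i\<in>UNIV. snd lam $ i *\<^sub>R Hr x i)"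

definition quadf :: "real^'n^'n \<Rightarrow> real^'n \<Rightarrow> real" where
  "quadf M u = u \<bullet> (M *v u)"

definition dir_Lambda ::
  "(real^'n \<Rightarrow> real) \<Rightarrow> (real^'n \<Rightarrow> real^'m) \<Rightarrow> (real^'n \<Rightarrow> real^'n) \<Rightarrow> (real^'n \<Rightarrow> real^'n^'m)
   \<Rightarrow> (real^'n \<Rightarrow> real^'n^'n) \<Rightarrow> (real^'n \<Rightarrow> 'm \<Rightarrow> real^'n^'n)
   \<Rightarrow> real^'n \<Rightarrow> real^'n \<Rightarrow> real^'n \<Rightarrow> (real \<times> (real^'m)) set" where
  "dir_Lambda g0 gr gg0 Jr Hg0 Hr x xs u =
     {lam \<in> Lambda g0 gr gg0 Jr x xs.
        \<forall>mu \<in> Lambda g0 gr gg0 Jr x xs.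
          quadf (hess_lag Hg0 Hr x mu + curv g0 gr gg0 Jr x mu) u
          \<le> quadf (hess_lag Hg0 Hr x lam + curv g0 gr gg0 Jr x lam) u}"

definition MSCQ ::
  "(real^'n \<Rightarrow> real) \<Rightarrow> (real^'n \<Rightarrow> real^'m) \<Rightarrow> real^'n \<Rightarrow> real \<Rightarrow> bool" where
  "MSCQ g0 gr xb \<sigma> \<longleftrightarrow> \<sigma> > 0 \<and>
     (\<exists>U. open U \<and> xb \<in> U \<and>
        (\<forall>x\<in>U. infdist x (Gamma g0 gr) \<le> \<sigma> * infdist (g0 x, gr x) SOC))"

end

theory Submission
  imports Defs
begin


lemma tendsto_mv:
  fixes A :: "'a \<Rightarrow> real^'n^'m"
  assumes "(A \<longlongrightarrow> A0) F" "(x \<longlongrightarrow> x0) F"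
  shows "((\<lambda>k. A k *v x k) \<longlongrightarrow> A0 *v x0) F"
proof (rule vec_tendstoI)
  fix i
  have "((\<lambda>k. \<Sum>j\<in>UNIV. A k $ i $ j * x k $ j) \<longlongrightarrow> (\<Sum>j\<in>UNIV. A0 $ i $ j * x0 $ j)) F"
    by (intro tendsto_sum tendsto_mult tendsto_vec_nth assms)
  then show "((\<lambda>k. (A k *v x k) $ i) \<longlongrightarrow> (A0 *v x0) $ i) F"
    by (simp add: matrix_vector_mult_def)
qed

lemma tendsto_transp:
  fixes A :: "'a \<Rightarrow> real^'n^'m"
  assumes "(A \<longlongrightarrow> A0) F"
  shows "((\<lambda>k. transpose (A k)) \<longlongrightarrow> transpose A0) F"
proof (rule vec_tendstoI)
  fix i
  show "((\<lambda>k. transpose (A k) $ i) \<longlongrightarrow> transpose A0 $ i) F"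
  proof (rule vec_tendstoI)
    fix j
    have "((\<lambda>k. A k $ j $ i) \<longlongrightarrow> A0 $ j $ i) F"
      by (intro tendsto_vec_nth assms)
    then show "((\<lambda>k. transpose (A k) $ i $ j) \<longlongrightarrow> transpose A0 $ i $ j) F"
      by (simp add: transpose_def)
  qed
qed

lemma jac_adj_inner: "lam \<bullet> jac_g gg0 Jr x u = jac_g_adj gg0 Jr x lam \<bullet> u"
  apply (cases lam)
  by (simp add: jac_g_def jac_g_adj_def inner_add_left dot_lmul_matrix)

lemma SOC_dual_iff: "q \<in> SOC_dual \<longleftrightarrow> norm (snd q) \<le> - fst q"
proof
  assume "q \<in> SOC_dual" then show "norm (snd q) \<le> - fst q"
    by (auto simp: SOC_dual_def SOC_def hat_def)
next
  assume "norm (snd q) \<le> - fst q"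
  then have "hat q \<in> SOC" "q = hat (hat q)" by (auto simp: SOC_def hat_def)
  then show "q \<in> SOC_dual" unfolding SOC_dual_def by blast
qed

lemma closed_SOC: "closed (SOC :: (real \<times> (real^'m)) set)"
  unfolding SOC_def by (intro closed_Collect_le continuous_intros)

lemma normal_sub: assumes "q \<in> SOC" "lam \<in> normal_SOC q" shows "lam \<in> SOC_dual"
proof -
  have fr: "frontier SOC \<subseteq> (SOC :: (real \<times> (real^'m)) set)"
    using closed_SOC by (metis Diff_subset closure_closed frontier_def)
  show ?thesis
  proof (cases "q = 0")
    case True then show ?thesis using assms by (simp add: normal_SOC_def)
  next
    case False
    show ?thesis
    proof (cases "q \<in> interior SOC")
      case True then show ?thesis using assms False by (simp add: normal_SOC_def SOC_dual_iff)
    next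
      case F2: False
      with assms False obtain a where a: "a \<ge> 0" "lam = a *\<^sub>R hat q" "q \<in> frontier SOC"
        by (auto simp: normal_SOC_def split: if_splits)
      then have "norm (snd q) \<le> fst q" using fr by (auto simp: SOC_def)
      then have "a * norm (snd q) \<le> a * fst q" using a by (simp add: mult_left_mono)
      then show ?thesis using a by (simp add: SOC_dual_iff hat_def)
    qed
  qed
qed

lemma qc1: "(\<chi> i j. a $ i * a $ j) *v u = (a \<bullet> u) *\<^sub>R (a::real^'n)"
proof -
  have "((\<chi> i j. a $ i * a $ j) *v u) $ i = ((a \<bullet> u) *\<^sub>R a) $ i" for i
  proof -
    have "((\<chi> i j. a $ i * a $ j) *v u) $ i = (\<Sum>j\<in>UNIV. a $ i * (a $ j * u $ j))"
      by (simp add: matrix_vector_mult_def mult.assoc)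
    also have "\<dots> = a $ i * (a \<bullet> u)"
      by (simp add: inner_vec_def sum_distrib_left)
    also have "\<dots> = ((a \<bullet> u) *\<^sub>R a) $ i" by simp
    finally show ?thesis .
  qed
  then show ?thesis by (simp add: vec_eq_iff)
qed

lemma qc2: "(u::real^'n) \<bullet> ((transpose J ** J) *v u) = (norm (J *v u))\<^sup>2"
proof -
  have "u \<bullet> ((transpose J ** J) *v u) = u \<bullet> (transpose J *v (J *v u))"
    by (simp only: matrix_vector_mul_assoc)
  also have "\<dots> = ((J *v u) v* J) \<bullet> u"
    by (simp only: transpose_matrix_vector inner_commute)
  also have "\<dots> = (J *v u) \<bullet> (J *v u)" by (rule dot_lmul_matrix)
  finally show ?thesis by (simp add: power2_norm_eq_inner)
qed

lemma quadf_curv: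
  fixes J :: "real^'n^'m" and a u :: "real^'n"
  shows "quadf (c *\<^sub>R (transpose J ** J - (\<chi> i j. a $ i * a $ j))) u
     = c * ((norm (J *v u))\<^sup>2 - (a \<bullet> u)\<^sup>2)"
proof -
  have "(c *\<^sub>R (transpose J ** J - (\<chi> i j. a $ i * a $ j))) *v u
      = c *\<^sub>R ((transpose J ** J - (\<chi> i j. a $ i * a $ j)) *v u)"
    by (rule scaleR_matrix_vector_assoc[symmetric])
  also have "\<dots> = c *\<^sub>R ((transpose J ** J) *v u - (a \<bullet> u) *\<^sub>R a)"
    by (simp only: matrix_vector_mult_diff_rdistrib qc1)
  finally have e: "(c *\<^sub>R (transpose J ** J - (\<chi> i j. a $ i * a $ j))) *v u
      = c *\<^sub>R ((transpose J ** J) *v u - (a \<bullet> u) *\<^sub>R a)" .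
  show ?thesis
    unfolding quadf_def e inner_scaleR_right inner_diff_right qc2
    by (simp add: power2_eq_square inner_commute)
qed

lemma dir_quot:
  fixes f :: "'a::real_normed_vector \<Rightarrow> 'b::real_normed_vector"
  assumes df: "(f has_derivative f') (at x)" and tp: "\<forall>j. t j > 0" and t0: "t \<longlonglongrightarrow> 0"
    and wv: "w \<longlonglongrightarrow> v"
  shows "(\<lambda>j. (f (x + t j *\<^sub>R w j) - f x) /\<^sub>R t j) \<longlonglongrightarrow> f' v"
proof -
  from df have bl: "bounded_linear f'"
    and D: "\<forall>e>0. \<exists>d>0. \<forall>y. norm (y - x) < d \<longrightarrow> norm (f y - f x - f' (y - x)) \<le> e * norm (y - x)"
    unfolding has_derivative_at_alt by auto
  have lin: "f' (c *\<^sub>R z) = c *\<^sub>R f' z" for c z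
    using bl by (simp add: linear_simps(5))
  have fw: "(\<lambda>j. f' (w j)) \<longlonglongrightarrow> f' v"
    using bl wv by (rule bounded_linear.tendsto)
  define M where "M = norm v + 1"
  have M: "M > 0" unfolding M_def by (simp add: add_nonneg_pos)
  have r0: "(\<lambda>j. (f (x + t j *\<^sub>R w j) - f x) /\<^sub>R t j - f' (w j)) \<longlonglongrightarrow> 0"
  proof (rule tendstoI)
    fix e :: real assume e: "e > 0"
    obtain d where d: "d > 0" "\<forall>y. norm (y - x) < d \<longrightarrow> norm (f y - f x - f' (y - x)) \<le> (e / (2*M)) * norm (y - x)"
      using D e M by (metis divide_pos_pos mult_pos_pos zero_less_numeral)
    have "(\<lambda>j. norm (w j)) \<longlonglongrightarrow> norm v" using wv by (rule tendsto_norm)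
    then have ev1: "eventually (\<lambda>j. norm (w j) < M) sequentially"
      unfolding M_def by (rule order_tendstoD) simp
    have "(\<lambda>j. t j *\<^sub>R w j) \<longlonglongrightarrow> 0 *\<^sub>R v" using t0 wv by (rule tendsto_scaleR)
    then have ev2: "eventually (\<lambda>j. norm (t j *\<^sub>R w j) < d) sequentially"
      using d(1) by (auto simp: tendsto_iff dist_norm)
    show "eventually (\<lambda>j. dist ((f (x + t j *\<^sub>R w j) - f x) /\<^sub>R t j - f' (w j)) 0 < e) sequentially"
      using ev1 ev2
    proof eventually_elim
      case (elim j)
      let ?y = "x + t j *\<^sub>R w j"
      have tj: "t j > 0" using tp by auto
      have "norm (f ?y - f x - f' (?y - x)) \<le> (e / (2*M)) * norm (?y - x)"
        using d(2) elim by (metis add_diff_cancel_left')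
      then have a: "norm (f ?y - f x - t j *\<^sub>R f' (w j)) \<le> (e / (2*M)) * (t j * norm (w j))"
        using tj by (simp add: lin)
      have eq: "(f ?y - f x) /\<^sub>R t j - f' (w j) = inverse (t j) *\<^sub>R (f ?y - f x - t j *\<^sub>R f' (w j))"
        using tj by (simp add: algebra_simps)
      have "norm ((f ?y - f x) /\<^sub>R t j - f' (w j)) = norm (f ?y - f x - t j *\<^sub>R f' (w j)) / t j"
        unfolding eq using tj by (simp add: divide_inverse_commute)
      also have "\<dots> \<le> (e / (2*M)) * (t j * norm (w j)) / t j"
        using a tj by (intro divide_right_mono) auto
      also have "\<dots> = (e / (2*M)) * norm (w j)" using tj by simp
      also have "\<dots> \<le> (e / (2*M)) * M" using elim e M by (intro mult_left_mono) auto
      also have "\<dots> = e / 2" using M by simp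
      also have "\<dots> < e" using e by simp
      finally show ?case by (simp add: dist_norm)
    qed
  qed
  have "(\<lambda>j. ((f (x + t j *\<^sub>R w j) - f x) /\<^sub>R t j - f' (w j)) + f' (w j)) \<longlonglongrightarrow> 0 + f' v"
    using r0 fw by (rule tendsto_add)
  then show ?thesis by simp
qed

lemma tan_SOC:
  assumes d0: "(g0 has_derivative (\<lambda>h. gg0 x \<bullet> h)) (at x)"
    and dr: "(gr has_derivative (\<lambda>h. Jr x *v h)) (at x)"
    and z: "g0 x = 0" "gr x = 0"
    and u: "u \<in> tangent_cone (Gamma g0 gr) x"
  shows "norm (Jr x *v u) \<le> gg0 x \<bullet> u"
proof -
  obtain t w where tw: "\<forall>k. t k > 0" "t \<longlonglongrightarrow> 0" "w \<longlonglongrightarrow> u" "\<forall>k. x + t k *\<^sub>R w k \<in> Gamma g0 gr"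
    using u unfolding tangent_cone_def by blast
  have A: "(\<lambda>j. (g0 (x + t j *\<^sub>R w j) - g0 x) /\<^sub>R t j) \<longlonglongrightarrow> gg0 x \<bullet> u"
    using dir_quot[OF d0 tw(1-3)] .
  have B: "(\<lambda>j. (gr (x + t j *\<^sub>R w j) - gr x) /\<^sub>R t j) \<longlonglongrightarrow> Jr x *v u"
    using dir_quot[OF dr tw(1-3)] .
  have B': "(\<lambda>j. norm ((gr (x + t j *\<^sub>R w j) - gr x) /\<^sub>R t j)) \<longlonglongrightarrow> norm (Jr x *v u)"
    using B by (rule tendsto_norm)
  have le: "norm ((gr (x + t j *\<^sub>R w j) - gr x) /\<^sub>R t j) \<le> (g0 (x + t j *\<^sub>R w j) - g0 x) /\<^sub>R t j" for j
  proof -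
    have tj: "t j > 0" using tw(1) by auto
    have "norm (gr (x + t j *\<^sub>R w j)) \<le> g0 (x + t j *\<^sub>R w j)"
      using tw(4) by (auto simp: Gamma_def SOC_def)
    then show ?thesis using tj z by (simp add: divide_right_mono)
  qed
  show ?thesis
    by (rule tendsto_le[OF trivial_limit_sequentially A B']) (rule always_eventually, use le in blast)
qed

lemma limsup_inf:
  fixes f :: "nat \<Rightarrow> real"
  assumes "\<forall>B. eventually (\<lambda>k. B < f k) sequentially"
  shows "limsup (\<lambda>k. ereal (f k)) = \<infinity>"
proof -
  have "(\<lambda>k. ereal (f k)) \<longlonglongrightarrow> \<infinity>"
    unfolding tendsto_PInfty using assms by simp
  then show ?thesis by (intro lim_imp_Limsup) simp_all
qed


theorem lemma4p2:
  fixes f :: "real^'n \<Rightarrow> real" and gf :: "real^'n \<Rightarrow> real^'n" and Hf :: "real^'n \<Rightarrow> real^'n^'n"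
    and g0 :: "real^'n \<Rightarrow> real" and gg0 :: "real^'n \<Rightarrow> real^'n" and Hg0 :: "real^'n \<Rightarrow> real^'n^'n"
    and gr :: "real^'n \<Rightarrow> real^'m" and Jr :: "real^'n \<Rightarrow> real^'n^'m"
    and Hr :: "real^'n \<Rightarrow> 'm \<Rightarrow> real^'n^'n"
    and xb :: "real^'n" and \<sigma> :: real
    and xs xst u :: "nat \<Rightarrow> real^'n" and lam :: "nat \<Rightarrow> real \<times> (real^'m)"
    and lt :: "real \<times> (real^'m)" and ut :: "real^'n"
  assumes U: "open U" "xb \<in> U"
    and f_C2: "\<forall>x\<in>U. (f has_derivative (\<lambda>h. gf x \<bullet> h)) (at x)"
              "\<forall>x\<in>U. (gf has_derivative (\<lambda>h. Hf x *v h)) (at x)"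
              "continuous_on U Hf"
    and g0_C2: "\<forall>x\<in>U. (g0 has_derivative (\<lambda>h. gg0 x \<bullet> h)) (at x)"
               "\<forall>x\<in>U. (gg0 has_derivative (\<lambda>h. Hg0 x *v h)) (at x)"
               "continuous_on U Hg0"
    and gr_C2: "\<forall>x\<in>U. (gr has_derivative (\<lambda>h. Jr x *v h)) (at x)"
               "\<forall>x\<in>U. \<forall>i. ((\<lambda>y. Jr y $ i) has_derivative (\<lambda>h. Hr x i *v h)) (at x)"
               "\<forall>i. continuous_on U (\<lambda>x. Hr x i)"
    and xb_feas: "g0 xb = 0" "gr xb = 0"
    and mscq: "MSCQ g0 gr xb \<sigma>"
    and xs_in: "\<forall>k. xs k \<in> Gamma g0 gr"
    and lim: "xs \<longlonglongrightarrow> xb" "xst \<longlonglongrightarrow> 0" "lam \<longlonglongrightarrow> lt" "u \<longlonglongrightarrow> ut"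
    and lam_in: "\<forall>k. lam k \<in> dir_Lambda g0 gr gg0 Jr Hg0 Hr (xs k) (xst k - gf (xs k)) (u k)
                     \<and> norm (lam k) \<le> \<sigma> * norm (xst k - gf (xs k))"
    and u_in: "\<forall>k. u k \<in> critical_cone g0 gr (xs k) (xst k - gf (xs k)) \<and> norm (u k) = 1"
    and lsup: "limsup (\<lambda>k. ereal (quadf (curv g0 gr gg0 Jr (xs k) (lam k)) (u k))) < \<infinity>"
  shows "lt \<in> Lambda g0 gr gg0 Jr xb (- gf xb) \<and> norm lt \<le> \<sigma> * norm (gf xb)
         \<and> {l \<in> Lambda g0 gr gg0 Jr xb (- gf xb). norm l \<le> \<sigma> * norm (gf xb)}
             \<subseteq> Lambda0 g0 gr gg0 Jr xb (- gf xb)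
         \<and> norm ut = 1
         \<and> lt \<bullet> jac_g gg0 Jr xb ut = 0
         \<and> fst lt * ((norm (Jr xb *v ut))\<^sup>2 - (gg0 xb \<bullet> ut)\<^sup>2) = 0"
  proof -
  let ?G = "\<lambda>x. (g0 x, gr x)"
  have Lk: "lam k \<in> Lambda g0 gr gg0 Jr (xs k) (xst k - gf (xs k))" for k
    using lam_in by (auto simp: dir_Lambda_def)
  have nk: "lam k \<in> normal_SOC (?G (xs k))" and adjk: "jac_g_adj gg0 Jr (xs k) (lam k) = xst k - gf (xs k)" for k
    using Lk[of k] by (auto simp: Lambda_def)
  have Gk: "?G (xs k) \<in> SOC" for k using xs_in by (auto simp: Gamma_def)
  have dk: "norm (snd (lam k)) \<le> - fst (lam k)" for k
    using normal_sub[OF Gk nk] by (simp add: SOC_dual_iff)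
  have evU: "eventually (\<lambda>k. xs k \<in> U) sequentially"
    using lim(1) U by (rule topological_tendstoD)
  have cgg0: "(\<lambda>k. gg0 (xs k)) \<longlonglongrightarrow> gg0 xb"
    using has_derivative_continuous[OF g0_C2(2)[rule_format, OF U(2)]] lim(1)
    by (rule isCont_tendsto_compose)
  have cgf: "(\<lambda>k. gf (xs k)) \<longlonglongrightarrow> gf xb"
    using has_derivative_continuous[OF f_C2(2)[rule_format, OF U(2)]] lim(1)
    by (rule isCont_tendsto_compose)
  have cg0: "(\<lambda>k. g0 (xs k)) \<longlonglongrightarrow> 0"
    using isCont_tendsto_compose[OF has_derivative_continuous[OF g0_C2(1)[rule_format, OF U(2)]] lim(1)]
    xb_feas by simp
  have cJr: "(\<lambda>k. Jr (xs k)) \<longlonglongrightarrow> Jr xb"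
  proof (rule vec_tendstoI)
    fix i
    show "((\<lambda>k. Jr (xs k) $ i) \<longlonglongrightarrow> Jr xb $ i)"
      using has_derivative_continuous[OF gr_C2(2)[rule_format, OF U(2)]] lim(1)
      by (rule isCont_tendsto_compose)
  qed
  have l0: "(\<lambda>k. fst (lam k)) \<longlonglongrightarrow> fst lt" using lim(3) by (rule tendsto_fst)
  have lr: "(\<lambda>k. snd (lam k)) \<longlonglongrightarrow> snd lt" using lim(3) by (rule tendsto_snd)
  have A: "norm (snd lt) \<le> - fst lt"
    by (rule tendsto_le[OF trivial_limit_sequentially tendsto_minus[OF l0] tendsto_norm[OF lr]])
       (simp add: dk)
  have B1: "(\<lambda>k. jac_g_adj gg0 Jr (xs k) (lam k)) \<longlonglongrightarrow> jac_g_adj gg0 Jr xb lt"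
    unfolding jac_g_adj_def
    by (intro tendsto_add tendsto_scaleR l0 cgg0 tendsto_mv tendsto_transp cJr lr)
  have B2: "(\<lambda>k. jac_g_adj gg0 Jr (xs k) (lam k)) \<longlonglongrightarrow> 0 - gf xb"
    unfolding adjk by (intro tendsto_diff lim(2) cgf)
  have B: "jac_g_adj gg0 Jr xb lt = - gf xb"
    using LIMSEQ_unique[OF B1 B2] by simp
  have G0: "?G xb = 0" using xb_feas by (simp add: zero_prod_def)
  have ltL: "lt \<in> Lambda g0 gr gg0 Jr xb (- gf xb)"
    unfolding Lambda_def normal_SOC_def G0 using A B by (simp add: SOC_dual_iff)
  have C: "norm lt \<le> \<sigma> * norm (gf xb)"
  proof -
    have "(\<lambda>k. \<sigma> * norm (xst k - gf (xs k))) \<longlonglongrightarrow> \<sigma> * norm (0 - gf xb)"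
      by (intro tendsto_mult tendsto_const tendsto_norm tendsto_diff lim(2) cgf)
    then show ?thesis
      by (intro tendsto_le[OF trivial_limit_sequentially _ tendsto_norm[OF lim(3)]]) (auto simp: lam_in)
  qed
  have D: "{l \<in> Lambda g0 gr gg0 Jr xb (- gf xb). norm l \<le> \<sigma> * norm (gf xb)}
             \<subseteq> Lambda0 g0 gr gg0 Jr xb (- gf xb)"
    by (auto simp: Lambda0_def)
  have E: "norm ut = 1"
  proof -
    have "(\<lambda>k. norm (u k)) \<longlonglongrightarrow> norm ut" using lim(4) by (rule tendsto_norm)
    moreover have "(\<lambda>k. norm (u k)) \<longlonglongrightarrow> 1" using u_in by simp
    ultimately show ?thesis by (rule LIMSEQ_unique)
  qed
  have cJu: "(\<lambda>k. Jr (xs k) *v u k) \<longlonglongrightarrow> Jr xb *v ut" using cJr lim(4) by (rule tendsto_mv)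
  have cgu: "(\<lambda>k. gg0 (xs k) \<bullet> u k) \<longlonglongrightarrow> gg0 xb \<bullet> ut" using cgg0 lim(4) by (rule tendsto_inner)
  have F: "lt \<bullet> jac_g gg0 Jr xb ut = 0"
  proof -
    have "(\<lambda>k. lam k \<bullet> jac_g gg0 Jr (xs k) (u k)) \<longlonglongrightarrow> lt \<bullet> jac_g gg0 Jr xb ut"
      unfolding jac_g_def by (intro tendsto_inner lim(3) tendsto_Pair cgu cJu)
    moreover have "lam k \<bullet> jac_g gg0 Jr (xs k) (u k) = 0" for k
      using u_in unfolding jac_adj_inner adjk by (auto simp: critical_cone_def inner_commute)
    ultimately show ?thesis by (simp add: LIMSEQ_const_iff)
  qed
  define d0 where "d0 = gg0 xb \<bullet> ut"
  define dr where "dr = Jr xb *v ut"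
  have Gq: "fst lt * ((norm dr)\<^sup>2 - d0\<^sup>2) = 0"
  proof (cases "fst lt = 0")
    case True then show ?thesis by simp
  next
    case False
    have lneg: "fst lt < 0" using A False norm_ge_zero[of "snd lt"] by linarith
    have Fe: "fst lt * d0 + snd lt \<bullet> dr = 0"
      using F by (cases lt) (simp add: jac_g_def d0_def dr_def)
    have sd: "snd lt \<bullet> dr = - (fst lt * d0)" using Fe by linarith
    have "(- fst lt) * \<bar>d0\<bar> = \<bar>snd lt \<bullet> dr\<bar>"
      unfolding sd using lneg by (simp add: abs_mult)
    also have "\<dots> \<le> norm (snd lt) * norm dr" by (rule Cauchy_Schwarz_ineq2)
    also have "\<dots> \<le> (- fst lt) * norm dr" using A by (intro mult_right_mono) auto
    finally have "\<bar>d0\<bar> \<le> norm dr" using lneg by simp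
    then have "\<bar>d0\<bar> \<le> \<bar>norm dr\<bar>" by simp
    then have Qge: "d0\<^sup>2 \<le> (norm dr)\<^sup>2" by (metis abs_le_square_iff)
    have Qle: "(norm dr)\<^sup>2 - d0\<^sup>2 \<le> 0"
    proof (rule ccontr)
      assume "\<not> ?thesis"
      then have Qp: "(norm dr)\<^sup>2 - d0\<^sup>2 > 0" by simp
      define Qt where "Qt = (norm dr)\<^sup>2 - d0\<^sup>2"
      define Q where "Q k = (norm (Jr (xs k) *v u k))\<^sup>2 - (gg0 (xs k) \<bullet> u k)\<^sup>2" for k
      have QT: "Q \<longlonglongrightarrow> Qt"
        unfolding Q_def Qt_def d0_def dr_def by (intro tendsto_diff tendsto_power tendsto_norm cJu cgu)
      have ev1: "eventually (\<lambda>k. Qt / 2 < Q k) sequentially"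
        using QT by (rule order_tendstoD) (use Qp Qt_def in simp)
      have ev2: "eventually (\<lambda>k. fst (lam k) < fst lt / 2) sequentially"
        using l0 by (rule order_tendstoD) (use lneg in simp)
      define c where "c = (- fst lt / 2) * (Qt / 2)"
      have cpos: "c > 0" unfolding c_def using lneg Qp Qt_def by (simp add: mult_neg_pos)
      have "\<forall>B. eventually (\<lambda>k. B < quadf (curv g0 gr gg0 Jr (xs k) (lam k)) (u k)) sequentially"
      proof
        fix B :: real
        define B' where "B' = max B 1"
        have B'p: "B' > 0" "B \<le> B'" unfolding B'_def by auto
        have ev3: "eventually (\<lambda>k. g0 (xs k) < c / B') sequentially"
          using cg0 by (rule order_tendstoD) (use cpos B'p in simp)
        show "eventually (\<lambda>k. B < quadf (curv g0 gr gg0 Jr (xs k) (lam k)) (u k)) sequentially"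
          using ev1 ev2 ev3 evU
        proof eventually_elim
          case (elim k)
          let ?x = "xs k"
          have G0k: "?G ?x \<noteq> 0"
          proof
            assume z: "?G ?x = 0"
            then have z': "g0 ?x = 0" "gr ?x = 0" by (auto simp: zero_prod_def)
            have "u k \<in> tangent_cone (Gamma g0 gr) ?x" using u_in by (auto simp: critical_cone_def)
            then have "norm (Jr ?x *v u k) \<le> gg0 ?x \<bullet> u k"
              using tan_SOC[of g0 gg0 "xs k" gr Jr "u k", OF g0_C2(1)[rule_format, OF elim(4)] gr_C2(1)[rule_format, OF elim(4)] z'] by blast
            then have "\<bar>norm (Jr ?x *v u k)\<bar> \<le> \<bar>gg0 ?x \<bullet> u k\<bar>" by simp
            then have "(norm (Jr ?x *v u k))\<^sup>2 \<le> (gg0 ?x \<bullet> u k)\<^sup>2" by (metis abs_le_square_iff)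
            then have "Q k \<le> 0" unfolding Q_def by simp
            then show False using elim(1) Qp Qt_def by simp
          qed
          have nint: "?G ?x \<notin> interior SOC"
          proof
            assume "?G ?x \<in> interior SOC"
            then have "lam k = 0" using nk[of k] G0k by (simp add: normal_SOC_def)
            then show False using elim(2) lneg by simp
          qed
          have fr: "?G ?x \<in> frontier SOC"
            using Gk[of k] nint closed_SOC by (simp add: frontier_def closure_subset[THEN subsetD])
          have g0pos: "g0 ?x > 0"
          proof -
            have "norm (gr ?x) \<le> g0 ?x" using Gk[of k] by (simp add: SOC_def)
            moreover have "g0 ?x \<noteq> 0"
            proof
              assume "g0 ?x = 0"
              then have "gr ?x = 0" using \<open>norm (gr ?x) \<le> g0 ?x\<close> by simp
              with \<open>g0 ?x = 0\<close> G0k show False by (simp add: zero_prod_def)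
            qed
            ultimately show ?thesis using norm_ge_zero[of "gr ?x"] by linarith
          qed
          have qv: "quadf (curv g0 gr gg0 Jr ?x (lam k)) (u k) = (- fst (lam k) / g0 ?x) * Q k"
          proof -
            have "curv g0 gr gg0 Jr ?x (lam k) = (- fst (lam k) / g0 ?x) *\<^sub>R
               (transpose (Jr ?x) ** Jr ?x - (\<chi> i j. gg0 ?x $ i * gg0 ?x $ j))"
              using fr G0k unfolding curv_def by simp
            then show ?thesis unfolding Q_def by (simp only: quadf_curv)
          qed
          have p1: "c < (- fst (lam k)) * Q k"
            unfolding c_def using elim(1,2) lneg Qp Qt_def
            by (intro mult_strict_mono) auto
          have p2: "c / g0 ?x < (- fst (lam k)) * Q k / g0 ?x"
            using p1 g0pos by (rule divide_strict_right_mono)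
          have p3: "B' < c / g0 ?x"
            using elim(3) g0pos B'p by (simp add: less_divide_eq pos_less_divide_eq mult.commute)
          show ?case using qv p2 p3 B'p by simp
        qed
      qed
      then have "limsup (\<lambda>k. ereal (quadf (curv g0 gr gg0 Jr (xs k) (lam k)) (u k))) = \<infinity>"
        by (rule limsup_inf)
      then show False using lsup by simp
    qed
    have "(norm dr)\<^sup>2 - d0\<^sup>2 = 0" using Qge Qle by simp
    then show ?thesis by simp
  qed
  show ?thesis
    using ltL C D E F Gq unfolding d0_def dr_def by blast
qed

end
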